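(* Let $M$ be a closed manifold, $f\colon M\to M$ a map, $n\ge2$, and $k,l$ positive integers with $kl=n$. Let $\Phi_n(f)\colon M^n\to M^n$, $(x_1,\dots,x_n)\mapsto(f(x_n),f(x_1),\dots,f(x_{n-1}))$, which is equivariant for the cyclic action of $\mathbb{Z}_n=\langle g\rangle$, $g(x_1,\dots,x_n)=(x_n,x_1,\dots,x_{n-1})$. Identify $(M^n)^{\mathbb{Z}_k}$ (fixed points of the subgroup of order $k$) with $M^l$ via the first $l$ coordinates, and let $\Phi_n^k(f)$ be the restriction of $\Phi_n(f)$ to $(M^n)^{\mathbb{Z}_k}$; its fixed points are exactly the points $(x,f(x),\dots,f^{l-1}(x))$ (repeated $k$ times) with $f^l(x)=x$. Then \[\mathrm{Fix}^c(\Phi_n^k(f))\to\mathrm{Fix}^c(f^l),\qquad[(x,f(x),\dots,f^{l-1}(x))]\mapsto[x]\] is a well-defined bijection.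
   Context: For a self-map $h$ of a space $Y$, two fixed points $y,y'$ lie in the same fixed point class if there is a path $\alpha$ from $y$ to $y'$ with $\alpha\simeq h(\alpha)$ relative to endpoints; $\mathrm{Fix}^c(h)$ denotes the set of fixed point classes. $f^l$ is the $l$-fold composite of $f$. *)

theory Defs
  imports "HOL-Analysis.Analysis"
begin

definition closed_manifold :: "'a topology \<Rightarrow> bool" where
  "closed_manifold X \<longleftrightarrow> compact_space X \<and> Hausdorff_space X \<and> second_countable X \<and>
     (\<exists>d. \<forall>x \<in> topspace X. \<exists>U. openin X U \<and> x \<in> U \<and>
        (\<exists>V. openin (Euclidean_space d) V \<and>
             subtopology X U homeomorphic_space subtopology (Euclidean_space d) V))"

definition fpc_rel :: "'a topology \<Rightarrow> ('a \<Rightarrow> 'a) \<Rightarrow> ('a \<times> 'a) set" where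
  "fpc_rel Y h = {(y, y'). y \<in> topspace Y \<and> h y = y \<and> y' \<in> topspace Y \<and> h y' = y' \<and>
     (\<exists>\<alpha>. pathin Y \<alpha> \<and> \<alpha> 0 = y \<and> \<alpha> 1 = y' \<and>
        homotopic_with (\<lambda>\<beta>. \<beta> 0 = y \<and> \<beta> 1 = y') (top_of_set {0..1}) Y \<alpha> (h \<circ> \<alpha>))}"

definition fixpts :: "'a topology \<Rightarrow> ('a \<Rightarrow> 'a) \<Rightarrow> 'a set" where
  "fixpts Y h = {y \<in> topspace Y. h y = y}"

definition fix_classes :: "'a topology \<Rightarrow> ('a \<Rightarrow> 'a) \<Rightarrow> 'a set set" where
  "fix_classes Y h = fixpts Y h // fpc_rel Y h"

definition fix_class :: "'a topology \<Rightarrow> ('a \<Rightarrow> 'a) \<Rightarrow> 'a \<Rightarrow> 'a set" where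
  "fix_class Y h y = fpc_rel Y h `` {y}"

text \<open>M^n as extensional functions on {0..<n} (coordinate i is x_{i+1}).\<close>
definition power_top :: "'a topology \<Rightarrow> nat \<Rightarrow> (nat \<Rightarrow> 'a) topology" where
  "power_top X n = product_topology (\<lambda>i. X) {..<n}"

definition Phi :: "nat \<Rightarrow> ('a \<Rightarrow> 'a) \<Rightarrow> (nat \<Rightarrow> 'a) \<Rightarrow> (nat \<Rightarrow> 'a)" where
  "Phi n f x = (\<lambda>i. if i < n then f (x ((i + n - 1) mod n)) else undefined)"

definition cyc :: "nat \<Rightarrow> (nat \<Rightarrow> 'a) \<Rightarrow> (nat \<Rightarrow> 'a)" where
  "cyc n x = (\<lambda>i. if i < n then x ((i + n - 1) mod n) else undefined)"

text \<open>(M^n)^{Z_k}: fixed points of the subgroup of order k, generated by g^l where kl = n.\<close>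
definition fixed_Zk :: "'a topology \<Rightarrow> nat \<Rightarrow> nat \<Rightarrow> (nat \<Rightarrow> 'a) set" where
  "fixed_Zk X n k = {x \<in> topspace (power_top X n). \<forall>j < k. (cyc n ^^ (j * (n div k))) x = x}"

definition orbit_pt :: "nat \<Rightarrow> nat \<Rightarrow> ('a \<Rightarrow> 'a) \<Rightarrow> 'a \<Rightarrow> (nat \<Rightarrow> 'a)" where
  "orbit_pt n l f x = (\<lambda>i. if i < n then (f ^^ (i mod l)) x else undefined)"

end

theory Submission
  imports Defs
begin

lemma cyc_pow:
  assumes "x \<in> extensional {..<n}" "n > 0"
  shows "(cyc n ^^ m) x = (\<lambda>i. if i < n then x ((i + (n - 1) * m) mod n) else undefined)"
proof (induction m)
  case 0
  show ?case using assms by (auto simp: extensional_def)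
next
  case (Suc m)
  have "((i + n - 1) mod n + (n - 1) * m) mod n = (i + (n - 1) * Suc m) mod n" for i
  proof -
    have "((i + n - 1) mod n + (n - 1) * m) mod n = (i + n - 1 + (n - 1) * m) mod n"
      by (simp add: mod_add_left_eq)
    also have "i + n - 1 + (n - 1) * m = i + (n - 1) * Suc m" using assms(2) by simp
    finally show ?thesis .
  qed
  then show ?case using Suc assms(2) by (auto simp: cyc_def fun_eq_iff)
qed

lemma funpow_mod:
  assumes "(f ^^ l) x = x"
  shows "(f ^^ a) x = (f ^^ (a mod l)) x"
proof -
  have "(f ^^ (l * q)) x = x" for q
    by (induction q) (simp_all add: funpow_add assms)
  moreover have "a = a mod l + l * (a div l)" by simp
  ultimately show ?thesis
    by (metis comp_apply funpow_add)
qed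

lemma arith1:
  assumes "l dvd n" "l > 0" "(i::nat) < n"
  shows "Suc (((i + n - 1) mod n) mod l) = (if i mod l = 0 then l else i mod l)"
proof -
  have n: "n > 0" using assms by simp
  have "((i + n - 1) mod n) mod l = (i + n - 1) mod l" using assms(1) by (simp add: mod_mod_cancel)
  obtain c where c: "n = l * c" using assms(1) by blast
  have "c \<ge> 1" using n c by (cases c) auto
  have "i + n - 1 = (i + l - 1) + l * (c - 1)" using c \<open>c \<ge> 1\<close> assms(2)
    by (simp add: algebra_simps)
  then have "(i + n - 1) mod l = (i + l - 1) mod l" by simp
  moreover have "Suc ((i + l - 1) mod l) = (if i mod l = 0 then l else i mod l)"
  proof -
    define q r where "q = i div l" and "r = i mod l"
    have qr: "i = l * q + r" "r < l" unfolding q_def r_def using assms(2) by simp_all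
    show ?thesis
    proof (cases "r = 0")
      case True
      then have "i + l - 1 = (l - 1) + l * q" using qr assms(2) by simp
      then have "(i + l - 1) mod l = ((l - 1) + l * q) mod l" by (simp only:)
      also have "\<dots> = (l - 1) mod l" by (rule mod_mult_self2)
      also have "\<dots> = l - 1" using assms(2) by simp
      finally have "(i + l - 1) mod l = l - 1" .
      then show ?thesis using True assms(2) unfolding r_def by simp
    next
      case False
      then have "i + l - 1 = (r - 1) + l * (Suc q)" using qr by simp
      then have "(i + l - 1) mod l = ((r - 1) + l * Suc q) mod l" by (simp only:)
      also have "\<dots> = (r - 1) mod l" by (rule mod_mult_self2)
      also have "\<dots> = r - 1" using qr by simp
      finally have "(i + l - 1) mod l = r - 1" .
      then show ?thesis using False unfolding r_def by simp
    qed
  qed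
  ultimately show ?thesis using \<open>((i + n - 1) mod n) mod l = (i + n - 1) mod l\<close> by simp
qed

lemma topspace_power_top: "topspace (power_top M n) = PiE {..<n} (\<lambda>_. topspace M)"
  by (simp add: power_top_def topspace_product_topology)

lemma fixed_Zk_sub: "fixed_Zk M n k \<subseteq> topspace (power_top M n)"
  by (auto simp: fixed_Zk_def)

lemma fZ_periodic:
  assumes "y \<in> fixed_Zk M n k" "k * l = n" "k > 0" "l > 0" "i < n"
  shows "y i = y (i mod l)"
proof -
  have n: "n > 0" "n div k = l" using assms by auto
  define m where "m = (i div l) * l"
  have "i div l < k" using assms by (metis div_less_iff_less_mult mult.commute)
  then have "(cyc n ^^ ((i div l) * (n div k))) y = y" using assms(1) unfolding fixed_Zk_def by blast
  then have cy: "(cyc n ^^ m) y = y" using n m_def by simp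
  have ext: "y \<in> extensional {..<n}" using assms(1) fixed_Zk_sub[of M n k]
    by (auto simp: topspace_power_top PiE_def)
  have "y i = y ((i + (n - 1) * m) mod n)"
    using cyc_pow[OF ext n(1), of m] cy assms(5) by (metis (no_types, lifting))
  moreover have "i + (n - 1) * m = i mod l + n * m"
  proof -
    have "m \<le> i" unfolding m_def by simp
    moreover have "i = i mod l + m" unfolding m_def by simp
    moreover have "(n - 1) * m = n * m - m" by (simp add: diff_mult_distrib)
    moreover have "m \<le> n * m" using n(1) by simp
    ultimately show ?thesis by linarith
  qed
  moreover have "i mod l < n" using assms by (metis le_less_trans mod_less_divisor mod_less_eq_dividend)
  ultimately show ?thesis by simp
qed

lemma fZ_intro:
  assumes "y \<in> PiE {..<n} (\<lambda>_. topspace M)" "\<forall>i<n. y i = y (i mod l)" "k * l = n" "k > 0" "l > 0"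
  shows "y \<in> fixed_Zk M n k"
proof -
  have n: "n > 0" "n div k = l" using assms by auto
  have ext: "y \<in> extensional {..<n}" using assms(1) by (auto simp: PiE_def)
  have "(cyc n ^^ (j * l)) y = y" for j
  proof -
    have "y ((i + (n - 1) * (j * l)) mod n) = y i" if "i < n" for i
    proof -
      have l: "l dvd n" using assms(3) by auto
      have "y ((i + (n - 1) * (j * l)) mod n) = y (((i + (n - 1) * (j * l)) mod n) mod l)"
        using assms(2) n by simp
      also have "((i + (n - 1) * (j * l)) mod n) mod l = (i + (n - 1) * (j * l)) mod l"
        using l by (simp add: mod_mod_cancel)
      also have "(i + (n - 1) * (j * l)) mod l = i mod l"
        by (metis mod_mult_self2 mult.assoc mult.commute)
      finally show ?thesis using assms(2) that by simp
    qed
    then show ?thesis using cyc_pow[OF ext n(1)] ext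
      by (auto simp: fun_eq_iff extensional_def)
  qed
  then show ?thesis using assms(1) n unfolding fixed_Zk_def topspace_power_top by auto
qed

lemma funpow_in: "continuous_map M M f \<Longrightarrow> x \<in> topspace M \<Longrightarrow> (f ^^ m) x \<in> topspace M"
  by (induction m) (auto simp: continuous_map_def)

lemma continuous_map_funpow: "continuous_map M M f \<Longrightarrow> continuous_map M M (f ^^ m)"
  by (induction m) (auto intro: continuous_map_compose)

lemma orbit_in:
  assumes "continuous_map M M f" "x \<in> topspace M" "k * l = n" "k > 0" "l > 0"
  shows "orbit_pt n l f x \<in> fixed_Zk M n k"
proof (rule fZ_intro[OF _ _ assms(3-5)])
  show "orbit_pt n l f x \<in> PiE {..<n} (\<lambda>_. topspace M)"
    using funpow_in[OF assms(1,2)] by (auto simp: orbit_pt_def PiE_def extensional_def)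
  have "i mod l < n" if "i < n" for i using that by (meson le_less_trans mod_less_eq_dividend)
  then show "\<forall>i<n. orbit_pt n l f x i = orbit_pt n l f x (i mod l)"
    by (auto simp: orbit_pt_def)
qed

lemma Phi_orbit:
  assumes "k * l = n" "k > 0" "l > 0"
  shows "Phi n f (orbit_pt n l f z) =
    (\<lambda>i. if i < n then (if i mod l = 0 then (f ^^ l) z else (f ^^ (i mod l)) z) else undefined)"
proof -
  have n: "n > 0" "l dvd n" using assms by auto
  have "f ((f ^^ (((i + n - 1) mod n) mod l)) z) = (if i mod l = 0 then (f ^^ l) z else (f ^^ (i mod l)) z)"
    if "i < n" for i
  proof -
    have "f ((f ^^ (((i + n - 1) mod n) mod l)) z) = (f ^^ Suc (((i + n - 1) mod n) mod l)) z" by simp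
    also have "\<dots> = (f ^^ (if i mod l = 0 then l else i mod l)) z"
      using arith1[OF n(2) assms(3) that] by simp
    finally show ?thesis by simp
  qed
  then show ?thesis using n by (auto simp: Phi_def orbit_pt_def fun_eq_iff)
qed

lemma orbit_fix:
  assumes "k * l = n" "k > 0" "l > 0" "(f ^^ l) x = x"
  shows "Phi n f (orbit_pt n l f x) = orbit_pt n l f x"
  unfolding Phi_orbit[OF assms(1-3)] using assms(4) by (auto simp: orbit_pt_def fun_eq_iff)

lemma fix_char:
  assumes "y \<in> fixed_Zk M n k" "Phi n f y = y" "k * l = n" "k > 0" "l > 0"
  shows "y = orbit_pt n l f (y 0) \<and> (f ^^ l) (y 0) = y 0"
proof -
  have n: "n > 0" using assms by auto
  have yi: "y i = f (y ((i + n - 1) mod n))" if "i < n" for i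
    using fun_cong[OF assms(2), of i] that by (simp add: Phi_def)
  have pw: "y i = (f ^^ i) (y 0)" if "i < n" for i
    using that
  proof (induction i)
    case 0 then show ?case by simp
  next
    case (Suc i)
    then have "y (Suc i) = f (y ((Suc i + n - 1) mod n))" using yi by blast
    also have "(Suc i + n - 1) mod n = i" using Suc.prems by simp
    finally show ?case using Suc by simp
  qed
  have fl: "(f ^^ l) (y 0) = y 0"
  proof (cases "l < n")
    case True
    then have "y l = y (l mod l)" using fZ_periodic[OF assms(1,3,4,5)] by blast
    then have "y l = y 0" by simp
    then show ?thesis using pw[OF True] by simp
  next
    case False
    have "l \<le> k * l" using assms(4) by simp
    then have ln: "l = n" using assms(3) False by linarith
    have "(0 + n - 1) mod n = n - 1" using n by simp
    then have "y 0 = f (y (n - 1))" using yi[OF n] by simp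
    also have "\<dots> = f ((f ^^ (n - 1)) (y 0))" using pw[of "n - 1"] n by simp
    also have "\<dots> = (f ^^ n) (y 0)"
    proof -
      obtain n' where "n = Suc n'" using n by (cases n) auto
      then show ?thesis by simp
    qed
    finally show ?thesis unfolding ln by (rule sym)
  qed
  have ext: "y \<in> extensional {..<n}" using assms(1) fixed_Zk_sub[of M n k]
    by (auto simp: topspace_power_top PiE_def)
  have "y i = orbit_pt n l f (y 0) i" for i
  proof (cases "i < n")
    case True
    then show ?thesis using pw[OF True] funpow_mod[OF fl, of i] by (simp add: orbit_pt_def)
  next
    case False
    then show ?thesis using ext by (simp add: orbit_pt_def extensional_def)
  qed
  then have "y = orbit_pt n l f (y 0)" by blast
  then show ?thesis using fl by blast
qed

lemma topspace_Y: "topspace (subtopology (power_top M n) (fixed_Zk M n k)) = fixed_Zk M n k"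
  using fixed_Zk_sub[of M n k] by (auto simp: topspace_subtopology)

lemma proj_cont:
  assumes "i < n"
  shows "continuous_map (subtopology (power_top M n) S) M (\<lambda>y. y i)"
  using assms unfolding power_top_def
  by (intro continuous_map_from_subtopology) (use continuous_map_product_projection[of i "{..<n}" "\<lambda>_. M"] in simp)

lemma dir_M2Y:
  assumes cf: "continuous_map M M f" and kl: "k * l = n" "k > 0" "l > 0"
    and x: "x \<in> topspace M" "(f ^^ l) x = x" and x': "x' \<in> topspace M" "(f ^^ l) x' = x'"
    and rel: "(x, x') \<in> fpc_rel M (f ^^ l)"
  shows "(orbit_pt n l f x, orbit_pt n l f x') \<in>
           fpc_rel (subtopology (power_top M n) (fixed_Zk M n k)) (Phi n f)"
proof -
  let ?Y = "subtopology (power_top M n) (fixed_Zk M n k)"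
  let ?T = "top_of_set {0..1::real}"
  have n: "n > 0" "l \<le> n" using kl by auto
  obtain \<gamma> where g: "pathin M \<gamma>" "\<gamma> 0 = x" "\<gamma> 1 = x'"
     and hom: "homotopic_with (\<lambda>\<beta>. \<beta> 0 = x \<and> \<beta> 1 = x') ?T M \<gamma> ((f ^^ l) \<circ> \<gamma>)"
    using rel unfolding fpc_rel_def by blast
  obtain K where K: "continuous_map (prod_topology ?T ?T) M K"
    "\<And>z. K (0, z) = \<gamma> z" "\<And>z. K (1, z) = ((f ^^ l) \<circ> \<gamma>) z"
    "\<And>s. s \<in> {0..1} \<Longrightarrow> K (s, 0) = x \<and> K (s, 1) = x'"
    using hom unfolding homotopic_with_def by auto
  have gc: "continuous_map ?T M \<gamma>" using g(1) by (simp add: pathin_def)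
  have gin: "\<gamma> t \<in> topspace M" if "t \<in> {0..1}" for t
    using gc that by (auto simp: continuous_map_def)
  have modn: "i mod l < n" for i using n kl(3) by (metis mod_less_divisor order_less_le_trans)
  define \<alpha> where "\<alpha> t = orbit_pt n l f (\<gamma> t)" for t
  have pa: "pathin ?Y \<alpha>"
    unfolding pathin_def continuous_map_in_subtopology
  proof
    show "continuous_map ?T (power_top M n) \<alpha>"
      unfolding power_top_def continuous_map_componentwise
    proof
      show "\<alpha> ` topspace ?T \<subseteq> extensional {..<n}"
        by (auto simp: \<alpha>_def orbit_pt_def extensional_def)
      show "\<forall>i\<in>{..<n}. continuous_map ?T M (\<lambda>t. \<alpha> t i)"
      proof
        fix i assume "i \<in> {..<n}"
        then have "(\<lambda>t. \<alpha> t i) = (f ^^ (i mod l)) \<circ> \<gamma>" by (auto simp: \<alpha>_def orbit_pt_def)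
        then show "continuous_map ?T M (\<lambda>t. \<alpha> t i)"
          using continuous_map_compose[OF gc continuous_map_funpow[OF cf]] by simp
      qed
    qed
    show "\<alpha> \<in> topspace ?T \<rightarrow> fixed_Zk M n k"
      using orbit_in[OF cf _ kl] gin by (auto simp: \<alpha>_def)
  qed
  define H where "H p = (\<lambda>i. if i < n then (if i mod l = 0 then K p else (f ^^ (i mod l)) (\<gamma> (snd p))) else undefined)" for p
  have Hc: "continuous_map (prod_topology ?T ?T) ?Y H"
    unfolding continuous_map_in_subtopology
  proof
    show "continuous_map (prod_topology ?T ?T) (power_top M n) H"
      unfolding power_top_def continuous_map_componentwise
    proof
      show "H ` topspace (prod_topology ?T ?T) \<subseteq> extensional {..<n}"
        by (auto simp: H_def extensional_def)
      show "\<forall>i\<in>{..<n}. continuous_map (prod_topology ?T ?T) M (\<lambda>p. H p i)"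
      proof
        fix i assume i: "i \<in> {..<n}"
        have c2: "continuous_map (prod_topology ?T ?T) M ((f ^^ (i mod l)) \<circ> \<gamma> \<circ> snd)"
          by (intro continuous_map_compose[OF continuous_map_snd] continuous_map_compose[OF gc continuous_map_funpow[OF cf]])
        show "continuous_map (prod_topology ?T ?T) M (\<lambda>p. H p i)"
        proof (cases "i mod l = 0")
          case True
          then have "(\<lambda>p. H p i) = K" using i by (auto simp: H_def fun_eq_iff)
          then show ?thesis using K(1) by simp
        next
          case False
          then have "(\<lambda>p. H p i) = (f ^^ (i mod l)) \<circ> \<gamma> \<circ> snd" using i by (auto simp: H_def fun_eq_iff)
          then show ?thesis using c2 by simp
        qed
      qed
    qed
    show "H \<in> topspace (prod_topology ?T ?T) \<rightarrow> fixed_Zk M n k"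
    proof
      fix p assume p: "p \<in> topspace (prod_topology ?T ?T)"
      then have "K p \<in> topspace M" using K(1) by (auto simp: continuous_map_def)
      moreover have "\<gamma> (snd p) \<in> topspace M" using p gin by auto
      ultimately have "H p \<in> PiE {..<n} (\<lambda>_. topspace M)"
        using funpow_in[OF cf] by (auto simp: H_def PiE_def extensional_def)
      moreover have "\<forall>i<n. H p i = H p (i mod l)" using modn by (auto simp: H_def)
      ultimately show "H p \<in> fixed_Zk M n k" by (rule fZ_intro[OF _ _ kl])
    qed
  qed
  have hY: "homotopic_with (\<lambda>\<beta>. \<beta> 0 = orbit_pt n l f x \<and> \<beta> 1 = orbit_pt n l f x') ?T ?Y \<alpha> (Phi n f \<circ> \<alpha>)"
    unfolding homotopic_with_def
  proof (intro exI conjI allI ballI)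
    show "continuous_map (prod_topology ?T ?T) ?Y H" by (rule Hc)
    fix z
    show "H (0, z) = \<alpha> z" using K(2) by (auto simp: H_def \<alpha>_def orbit_pt_def fun_eq_iff)
    show "H (1, z) = (Phi n f \<circ> \<alpha>) z" using K(3) by (auto simp: H_def \<alpha>_def Phi_orbit[OF kl] fun_eq_iff)
  next
    fix s :: real assume s: "s \<in> {0..1}"
    show "H (s, 0) = orbit_pt n l f x" using K(4)[OF s] g(2) by (auto simp: H_def orbit_pt_def fun_eq_iff)
    show "H (s, 1) = orbit_pt n l f x'" using K(4)[OF s] g(3) by (auto simp: H_def orbit_pt_def fun_eq_iff)
  qed
  have "\<alpha> 0 = orbit_pt n l f x" "\<alpha> 1 = orbit_pt n l f x'" using g by (auto simp: \<alpha>_def)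
  moreover have "orbit_pt n l f x \<in> topspace ?Y" "orbit_pt n l f x' \<in> topspace ?Y"
    unfolding topspace_Y using orbit_in[OF cf _ kl] x x' by auto
  moreover have "Phi n f (orbit_pt n l f x) = orbit_pt n l f x" "Phi n f (orbit_pt n l f x') = orbit_pt n l f x'"
    using orbit_fix[OF kl x(2)] orbit_fix[OF kl x'(2)] by auto
  ultimately show ?thesis using pa hY unfolding fpc_rel_def by blast
qed

lemma arith2: assumes "k * l = (n::nat)" "k > 0" "l > 0" shows "(n - 1) mod l = l - 1"
proof -
  have "n - 1 = (l - 1) + l * (k - 1)" using assms
    by (cases k) (auto simp: algebra_simps)
  then have "(n - 1) mod l = ((l - 1) + l * (k - 1)) mod l" by (simp only:)
  also have "\<dots> = (l - 1) mod l" by (rule mod_mult_self2)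
  finally show ?thesis using assms by simp
qed

lemma fpc_relD:
  assumes "(y, y') \<in> fpc_rel Y h"
  obtains \<alpha> where "pathin Y \<alpha>" "\<alpha> 0 = y" "\<alpha> 1 = y'"
    "homotopic_with (\<lambda>\<beta>. \<beta> 0 = y \<and> \<beta> 1 = y') (top_of_set {0..1}) Y \<alpha> (h \<circ> \<alpha>)"
  using assms unfolding fpc_rel_def by blast

lemma homotopic_withD:
  fixes Y :: "'y topology"
  assumes "homotopic_with (\<lambda>\<beta>. \<beta> 0 = y \<and> \<beta> 1 = y') (top_of_set {0..1::real}) Y p q"
  obtains H :: "real \<times> real \<Rightarrow> 'y" where "continuous_map (prod_topology (top_of_set {0..1}) (top_of_set {0..1::real})) Y H"
    "\<And>z. H (0, z) = p z" "\<And>z. H (1, z) = q z"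
    "\<And>s. s \<in> {0..1} \<Longrightarrow> H (s, 0) = y \<and> H (s, 1) = y'"
  using assms unfolding homotopic_with_def by blast

lemma dir_Y2M:
  assumes cf: "continuous_map M M f" and kl: "k * l = n" "k > 0" "l > 0"
    and x: "x \<in> topspace M" "(f ^^ l) x = x" and x': "x' \<in> topspace M" "(f ^^ l) x' = x'"
    and rel: "(orbit_pt n l f x, orbit_pt n l f x') \<in>
           fpc_rel (subtopology (power_top M n) (fixed_Zk M n k)) (Phi n f)"
  shows "(x, x') \<in> fpc_rel M (f ^^ l)"
proof -
  let ?Y = "subtopology (power_top M n) (fixed_Zk M n k)"
  let ?T = "top_of_set {0..1::real}"
  let ?ox = "orbit_pt n l f x" and ?ox' = "orbit_pt n l f x'"
  have n: "n > 0" "l \<le> n" using kl by auto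
  obtain \<alpha> where a: "pathin ?Y \<alpha>" "\<alpha> 0 = ?ox" "\<alpha> 1 = ?ox'"
     and hom: "homotopic_with (\<lambda>\<beta>. \<beta> 0 = ?ox \<and> \<beta> 1 = ?ox') ?T ?Y \<alpha> (Phi n f \<circ> \<alpha>)"
    by (rule fpc_relD[OF rel])
  obtain H where H: "continuous_map (prod_topology ?T ?T) ?Y H"
    "\<And>z. H (0, z) = \<alpha> z" "\<And>z. H (1, z) = (Phi n f \<circ> \<alpha>) z"
    "\<And>s. s \<in> {0..1} \<Longrightarrow> H (s, 0) = ?ox \<and> H (s, 1) = ?ox'"
    using homotopic_withD[OF hom] by blast
  have ac: "continuous_map ?T ?Y \<alpha>" using a(1) by (simp add: pathin_def)
  define \<beta> where "\<beta> i = (\<lambda>t. \<alpha> t i)" for i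
  have bc: "continuous_map ?T M (\<beta> i)" if "i < n" for i
    using continuous_map_compose[OF ac proj_cont[OF that]] by (simp add: \<beta>_def o_def)
  have oxi: "?ox i = (f ^^ i) x" "?ox' i = (f ^^ i) x'" if "i < l" for i
    using that n by (auto simp: orbit_pt_def)
  have homi: "homotopic_with (\<lambda>\<beta>. \<beta> 0 = ?ox i \<and> \<beta> 1 = ?ox' i) ?T M (\<beta> i)
                 (\<lambda>t. f (\<alpha> t ((i + n - 1) mod n)))" if i: "i < n" for i
    unfolding homotopic_with_def
  proof (intro exI conjI allI ballI)
    show "continuous_map (prod_topology ?T ?T) M (\<lambda>p. H p i)"
      using continuous_map_compose[OF H(1) proj_cont[OF i]] by (simp add: o_def)
    fix z
    show "H (0, z) i = \<beta> i z" using H(2) by (simp add: \<beta>_def)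
    show "H (1, z) i = f (\<alpha> z ((i + n - 1) mod n))" using H(3) i by (simp add: Phi_def)
  next
    fix s :: real assume s: "s \<in> {0..1}"
    show "H (s, 0) i = ?ox i" "H (s, 1) i = ?ox' i" using H(4)[OF s] by auto
  qed
  have chain: "homotopic_with (\<lambda>\<beta>. \<beta> 0 = (f ^^ m) x \<and> \<beta> 1 = (f ^^ m) x') ?T M (\<beta> m) ((f ^^ m) \<circ> \<beta> 0)"
    if "m < l" for m
    using that
  proof (induction m)
    case 0
    have "\<beta> 0 0 = x" "\<beta> 0 1 = x'" using a(2,3) oxi[OF kl(3)] by (auto simp: \<beta>_def)
    then show ?case using bc[OF n(1)] by simp
  next
    case (Suc m)
    have sm: "Suc m < n" using Suc.prems n by simp
    have h1: "homotopic_with (\<lambda>\<beta>. \<beta> 0 = (f ^^ Suc m) x \<and> \<beta> 1 = (f ^^ Suc m) x') ?T M (\<beta> (Suc m)) (f \<circ> \<beta> m)"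
    proof -
      have "(Suc m + n - 1) mod n = m" using sm by simp
      then show ?thesis using homi[OF sm] oxi[OF Suc.prems] by (simp add: \<beta>_def o_def)
    qed
    have h2: "homotopic_with (\<lambda>\<beta>. \<beta> 0 = (f ^^ Suc m) x \<and> \<beta> 1 = (f ^^ Suc m) x') ?T M (f \<circ> \<beta> m) (f \<circ> ((f ^^ m) \<circ> \<beta> 0))"
      by (rule homotopic_with_compose_continuous_map_left[OF Suc.IH cf]) (use Suc.prems in auto)
    have e: "(f ^^ Suc m) \<circ> \<beta> 0 = f \<circ> ((f ^^ m) \<circ> \<beta> 0)" by (simp add: fun_eq_iff)
    show ?case unfolding e by (rule homotopic_with_trans[OF h1 h2])
  qed
  define P where "P = (\<lambda>\<beta>::real \<Rightarrow> 'a. \<beta> 0 = x \<and> \<beta> 1 = x')"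
  have l1: "l - 1 < l" using kl by simp
  have Sl: "Suc (l - 1) = l" using kl by simp
  have h3: "homotopic_with P ?T M (f \<circ> \<beta> (l - 1)) (f \<circ> ((f ^^ (l - 1)) \<circ> \<beta> 0))"
  proof (rule homotopic_with_compose_continuous_map_left[OF chain[OF l1] cf])
    fix j :: "real \<Rightarrow> 'a" assume "j 0 = (f ^^ (l - 1)) x \<and> j 1 = (f ^^ (l - 1)) x'"
    then show "P (f \<circ> j)" using x(2) x'(2) funpow.simps(2)[of "l - 1" f] Sl
      by (auto simp: P_def)
  qed
  have eqf: "f \<circ> ((f ^^ (l - 1)) \<circ> \<beta> 0) = (f ^^ l) \<circ> \<beta> 0"
    using funpow.simps(2)[of "l - 1" f] Sl by (simp add: o_assoc)
  have h0: "homotopic_with P ?T M (\<beta> 0) (\<lambda>t. f (\<alpha> t (n - 1)))"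
    using homi[OF n(1)] oxi[OF kl(3)] n by (simp add: P_def)
  have pe: "(\<lambda>t. f (\<alpha> t (n - 1))) t = (f \<circ> \<beta> (l - 1)) t" if "t \<in> topspace ?T" for t
  proof -
    have "\<alpha> t \<in> fixed_Zk M n k" using ac that topspace_Y[of M n k] by (auto simp: continuous_map_def)
    then have "\<alpha> t (n - 1) = \<alpha> t ((n - 1) mod l)" using fZ_periodic[where i="n - 1", OF _ kl] n by auto
    then show ?thesis using arith2[OF kl] by (simp add: \<beta>_def)
  qed
  have h4: "homotopic_with P ?T M (\<lambda>t. f (\<alpha> t (n - 1))) (f \<circ> \<beta> (l - 1))"
  proof (rule homotopic_with_equal)
    show "P (\<lambda>t. f (\<alpha> t (n - 1)))" using homotopic_with_imp_property[OF h0] by blast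
    show "P (f \<circ> \<beta> (l - 1))" using homotopic_with_imp_property[OF h3] by blast
    show "continuous_map ?T M (\<lambda>t. f (\<alpha> t (n - 1)))" using homotopic_with_imp_continuous_maps[OF h0] by blast
  qed (rule pe)
  have hfin: "homotopic_with P ?T M (\<beta> 0) ((f ^^ l) \<circ> \<beta> 0)"
    using homotopic_with_trans[OF homotopic_with_trans[OF h0 h4] h3] eqf by simp
  have "pathin M (\<beta> 0)" using bc[OF n(1)] by (simp add: pathin_def)
  moreover have "\<beta> 0 0 = x" "\<beta> 0 1 = x'" using a(2,3) oxi[OF kl(3)] by (auto simp: \<beta>_def)
  ultimately show ?thesis using hfin x x' unfolding fpc_rel_def P_def by blast
qed

theorem lemma5p7:
  fixes M :: "'a topology" and f :: "'a \<Rightarrow> 'a" and n k l :: nat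
  assumes "closed_manifold M"
    and "continuous_map M M f"
    and "n \<ge> 2" and "k > 0" and "l > 0" and "k * l = n"
  shows "\<exists>F. bij_betw F
              (fix_classes (subtopology (power_top M n) (fixed_Zk M n k)) (Phi n f))
              (fix_classes M (f ^^ l)) \<and>
            (\<forall>x \<in> topspace M. (f ^^ l) x = x \<longrightarrow>
               F (fix_class (subtopology (power_top M n) (fixed_Zk M n k)) (Phi n f)
                    (orbit_pt n l f x)) = fix_class M (f ^^ l) x)"
proof -
  let ?Y = "subtopology (power_top M n) (fixed_Zk M n k)"
  let ?R = "fpc_rel ?Y (Phi n f)" and ?S = "fpc_rel M (f ^^ l)"
  let ?o = "orbit_pt n l f"
  have cf: "continuous_map M M f" by fact
  have kl: "k * l = n" "k > 0" "l > 0" using assms by auto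
  have n: "n > 0" using assms by simp
  have o0: "?o x 0 = x" for x using n by (simp add: orbit_pt_def)
  have fixY: "fixpts ?Y (Phi n f) = ?o ` fixpts M (f ^^ l)"
  proof
    show "fixpts ?Y (Phi n f) \<subseteq> ?o ` fixpts M (f ^^ l)"
    proof
      fix y assume "y \<in> fixpts ?Y (Phi n f)"
      then have y: "y \<in> fixed_Zk M n k" "Phi n f y = y" unfolding fixpts_def topspace_Y by auto
      then have "y 0 \<in> topspace M" using fixed_Zk_sub[of M n k] n
        by (auto simp: topspace_power_top PiE_def Pi_def)
      then show "y \<in> ?o ` fixpts M (f ^^ l)"
        using fix_char[OF y kl] unfolding fixpts_def by (metis (mono_tags, lifting) image_eqI mem_Collect_eq)
    qed
    show "?o ` fixpts M (f ^^ l) \<subseteq> fixpts ?Y (Phi n f)"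
      unfolding fixpts_def topspace_Y using orbit_in[OF cf _ kl] orbit_fix[OF kl] by auto
  qed
  have cls: "?R `` {?o x} = ?o ` (?S `` {x})" if x: "x \<in> fixpts M (f ^^ l)" for x
  proof
    have x1: "x \<in> topspace M" "(f ^^ l) x = x" using x by (auto simp: fixpts_def)
    show "?R `` {?o x} \<subseteq> ?o ` (?S `` {x})"
    proof
      fix z assume "z \<in> ?R `` {?o x}"
      then have rz: "(?o x, z) \<in> ?R" by simp
      then have "z \<in> fixpts ?Y (Phi n f)" unfolding fpc_rel_def fixpts_def by blast
      then obtain x' where x': "x' \<in> fixpts M (f ^^ l)" "z = ?o x'" using fixY by blast
      then have "(x, x') \<in> ?S" using dir_Y2M[OF cf kl x1] rz by (auto simp: fixpts_def)
      then show "z \<in> ?o ` (?S `` {x})" using x' by blast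
    qed
    show "?o ` (?S `` {x}) \<subseteq> ?R `` {?o x}"
    proof
      fix z assume "z \<in> ?o ` (?S `` {x})"
      then obtain x' where x': "(x, x') \<in> ?S" "z = ?o x'" by blast
      then have "x' \<in> topspace M" "(f ^^ l) x' = x'" unfolding fpc_rel_def by auto
      then show "z \<in> ?R `` {?o x}" using dir_M2Y[OF cf kl x1 _ _ x'(1)] x'(2) by auto
    qed
  qed
  have bk: "(\<lambda>y. y 0) ` ?o ` A = A" for A
    using o0 by (simp add: image_image)
  define F where "F C = (\<lambda>y. y 0) ` C" for C :: "(nat \<Rightarrow> 'a) set"
  have Fcls: "F (?R `` {?o x}) = ?S `` {x}" if "x \<in> fixpts M (f ^^ l)" for x
    using cls[OF that] bk by (simp add: F_def)
  have classesY: "fix_classes ?Y (Phi n f) = (\<lambda>x. ?R `` {?o x}) ` fixpts M (f ^^ l)"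
    unfolding fix_classes_def quotient_def fixY by auto
  have classesM: "fix_classes M (f ^^ l) = (\<lambda>x. ?S `` {x}) ` fixpts M (f ^^ l)"
    unfolding fix_classes_def quotient_def by auto
  have bij: "bij_betw F (fix_classes ?Y (Phi n f)) (fix_classes M (f ^^ l))"
    unfolding bij_betw_def
  proof
    show "inj_on F (fix_classes ?Y (Phi n f))"
    proof (rule inj_onI)
      fix C1 C2 assume "C1 \<in> fix_classes ?Y (Phi n f)" "C2 \<in> fix_classes ?Y (Phi n f)" "F C1 = F C2"
      then obtain x1 x2 where "x1 \<in> fixpts M (f ^^ l)" "x2 \<in> fixpts M (f ^^ l)"
        "C1 = ?R `` {?o x1}" "C2 = ?R `` {?o x2}" "F C1 = F C2" unfolding classesY by blast
      then show "C1 = C2" using Fcls cls by metis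
    qed
    show "F ` fix_classes ?Y (Phi n f) = fix_classes M (f ^^ l)"
      unfolding classesY classesM image_image using Fcls by (auto intro!: image_cong)
  qed
  have "F (fix_class ?Y (Phi n f) (?o x)) = fix_class M (f ^^ l) x"
    if "x \<in> topspace M" "(f ^^ l) x = x" for x
    using Fcls[of x] that unfolding fix_class_def fixpts_def by simp
  then show ?thesis using bij by blast
qed

end
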